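(* For any $\lambda>0$ and any integer $n\ge 4\lambda^{-2}+1$, $$P\{\chi^2_{n+1}<(n+1)(1-\lambda)\}\le P\{\chi^2_n\le n(1-\lambda)\},$$ where $\chi^2_k$ denotes a chi-square random variable with $k$ degrees of freedom. *)

theory Defs
  imports "HOL-Probability.Probability"
begin

definition chi_square_density :: "nat \<Rightarrow> real \<Rightarrow> real" where
  "chi_square_density k x =
     (if x > 0 then x powr (real k / 2 - 1) * exp (- x / 2) / (2 powr (real k / 2) * Gamma (real k / 2))
      else 0)"

definition chi_square :: "nat \<Rightarrow> real measure" where
  "chi_square k = density lborel (\<lambda>x. ennreal (chi_square_density k x))"

end

theory Submission
  imports Defs
begin

lemma Gamma_plus1_pos: "(x::real) > 0 \<Longrightarrow> Gamma (x + 1) = x * Gamma x"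
  by (rule Gamma_plus1) (auto elim!: nonpos_Ints_cases)

lemma gamma_ratio:
  fixes x :: real assumes x: "x > 0"
  shows "ln (Gamma x) - ln (Gamma (x + 1/2)) \<le> ln (x + 1/2) / 2 - ln x"
proof -
  have "(ln \<circ> Gamma) ((1 - 1/2) *\<^sub>R (x + 1/2) + (1/2) *\<^sub>R (x + 3/2))
        \<le> (1 - 1/2) * (ln \<circ> Gamma) (x + 1/2) + (1/2) * (ln \<circ> Gamma) (x + 3/2)"
    by (rule convex_onD[OF log_convex_Gamma_real]) (use x in auto)
  moreover have "(1 - 1/2) *\<^sub>R (x + 1/2) + (1/2) *\<^sub>R (x + 3/2) = x + 1"
    by (simp add: field_simps)
  moreover have "Gamma (x + 1) = x * Gamma x" using Gamma_plus1_pos x by blast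
  moreover have "Gamma (x + 3/2) = (x + 1/2) * Gamma (x + 1/2)"
    using Gamma_plus1_pos[of "x + 1/2"] x by (simp add: add.assoc)
  moreover have "Gamma x > 0" "Gamma (x+1/2) > 0" using x by auto
  moreover have "Gamma x \<noteq> 0" using x by (metis Gamma_real_pos less_irrefl)
  ultimately have "ln x + ln (Gamma x) \<le> ln (Gamma (x + 1 / 2)) / 2 + (ln (x + 1 / 2) + ln (Gamma (x + 1 / 2))) / 2"
    using x by (simp add: ln_mult)
  then show ?thesis by (simp add: field_simps)
qed

lemma ln_bound:
  fixes l :: real assumes "0 \<le> l" "l < 1"
  shows "ln (1 - l) \<le> - l - l^2/2"
proof -
  let ?f = "\<lambda>t::real. ln (1 - t) + t + t^2/2"
  have "?f l \<le> ?f 0"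
  proof (rule DERIV_nonpos_imp_decreasing_open[of 0 l ?f])
    fix t assume t: "0 < t" "t < l"
    have "DERIV ?f t :> (- 1 / (1 - t) + 1 + t)"
      using t assms by (auto intro!: derivative_eq_intros simp: field_simps)
    moreover have "- 1 / (1 - t) + 1 + t \<le> 0"
      using t assms by (simp add: field_simps power2_eq_square)
    ultimately show "\<exists>y. DERIV ?f t :> y \<and> y \<le> 0" by blast
  next
    show "continuous_on {0..l} ?f" using assms
      by (auto intro!: continuous_intros)
  qed (use assms in auto)
  then show ?thesis by simp
qed

lemma key:
  fixes lam y :: real and n :: nat
  assumes lam: "0 < lam" "lam < 1" and n: "real n \<ge> 4 / lam\<^sup>2 + 1"
    and y: "0 < y" "y \<le> real n * (1 - lam)"
  shows "((real n + 1) / real n) * chi_square_density (n + 1) (((real n + 1) / real n) * y)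
         \<le> chi_square_density n y"
proof -
  define N where "N = real n"
  define c where "c = 1 - lam"
  define a where "a = (N + 1) / N"
  have l2: "lam\<^sup>2 < 1" using mult_strict_mono[of lam 1 lam 1] lam by (simp add: power2_eq_square)
  have "4 / lam\<^sup>2 > 4" using l2 lam by (simp add: field_simps)
  hence N5: "N > 5" using n N_def by linarith
  have c: "0 < c" "c < 1" using lam c_def by auto
  have a: "a > 0" "a > 1" using N5 unfolding a_def by (auto simp: divide_simps)
  have ay: "a * y > 0" using a y by simp
  have G1: "Gamma ((N+1)/2) > 0" "Gamma (N/2) > 0" using N5 by auto
  define L where "L = a * chi_square_density (n + 1) (a * y)"
  define R where "R = chi_square_density n y"
  have L: "L = a * ((a*y) powr ((N+1)/2 - 1) * exp (- (a*y) / 2) / (2 powr ((N+1)/2) * Gamma ((N+1)/2)))"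
    unfolding L_def chi_square_density_def N_def using ay by (simp add: add_ac)
  have R: "R = y powr (N/2 - 1) * exp (- y / 2) / (2 powr (N/2) * Gamma (N/2))"
    unfolding R_def chi_square_density_def N_def using y by simp
  have Lpos: "L > 0" unfolding L using a ay G1 by (intro mult_pos_pos divide_pos_pos) auto
  have Rpos: "R > 0" using R y G1 by simp
  have lnL: "ln L = ln a + ((N+1)/2 - 1) * (ln a + ln y) - a*y/2 - ((N+1)/2) * ln 2 - ln (Gamma ((N+1)/2))"
    unfolding L using a y G1 by (simp add: ln_mult ln_div ln_powr)
  have lnR: "ln R = (N/2 - 1) * ln y - y/2 - (N/2) * ln 2 - ln (Gamma (N/2))"
    unfolding R using y G1 by (simp add: ln_mult ln_div ln_powr)
  have i1: "ln y - y / N \<le> ln (N*c) - c"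
  proof -
    define t where "t = y / (N*c)"
    have t: "0 < t" "t \<le> 1" using y c N5 unfolding t_def N_def c_def by (auto simp: field_simps)
    have "ln t \<le> t - 1" using ln_le_minus_one t by simp
    also have "\<dots> \<le> c * (t - 1)" using t c mult_nonneg_nonneg[of "1-c" "1-t"] by (simp add: algebra_simps)
    finally have "ln t \<le> c * (t - 1)" .
    moreover have "ln t = ln y - ln (N*c)" unfolding t_def using y c N5 by (simp add: ln_div)
    moreover have "c * (t - 1) = y / N - c" unfolding t_def using c N5 by (simp add: field_simps)
    ultimately show ?thesis by linarith
  qed
  have i2: "ln (Gamma (N/2)) - ln (Gamma ((N+1)/2)) \<le> ln (N/2 + 1/2) / 2 - ln (N/2)"
    using gamma_ratio[of "N/2"] N5 by (simp add: add_divide_distrib)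
  have i3: "ln a \<le> 1 / N"
    using ln_add_one_self_le_self[of "1/N"] N5 unfolding a_def by (simp add: field_simps)
  have i4: "ln c \<le> - lam - lam^2/2" using ln_bound[of lam] lam c_def by simp
  have i5: "2 / N \<le> lam^2 / 2"
  proof -
    have "4 / lam^2 \<le> N" using n N_def by linarith
    hence "4 \<le> N * lam^2" using lam by (simp add: field_simps)
    thus ?thesis using N5 by (simp add: field_simps)
  qed
  have e1: "ln (N*c) = ln N + ln c" using N5 c by (simp add: ln_mult)
  have e2: "ln (N/2 + 1/2) = ln (N+1) - ln 2" using N5 by (simp add: ln_div add_divide_distrib[symmetric])
  have e3: "ln (N/2) = ln N - ln 2" using N5 by (simp add: ln_div)
  have e4: "ln a = ln (N+1) - ln N" unfolding a_def using N5 by (simp add: ln_div)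
  have "ln L - ln R = ((N+1)/2) * ln a + (ln y - y/N)/2 - ln 2 / 2 + (ln (Gamma (N/2)) - ln (Gamma ((N+1)/2)))"
    unfolding lnL lnR a_def using N5 by (simp add: field_simps)
  also have "\<dots> \<le> ((N+1)/2) * ln a + (ln (N*c) - c)/2 - ln 2 / 2 + (ln (N/2 + 1/2) / 2 - ln (N/2))"
    using add_mono[OF diff_mono[OF add_left_mono[OF divide_right_mono[OF i1, of 2]] order_refl[of "ln 2 / 2"]] i2, of "(N+1)/2 * ln a"] by simp
  also have "\<dots> = ((N+2)/2) * ln a + (ln c - c)/2"
    unfolding e1 e2 e3 using e4 by (simp add: field_simps)
  also have "\<dots> \<le> ((N+2)/2) * (1/N) + (ln c - c)/2"
    using i3 N5 by (intro add_right_mono mult_left_mono) auto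
  also have "\<dots> = 1/2 + 1/N + (ln c - c)/2" using N5 by (simp add: field_simps)
  also have "\<dots> \<le> 0" using i4 i5 unfolding c_def by (simp add: field_simps)
  finally have "ln L \<le> ln R" by simp
  hence "L \<le> R" using Lpos Rpos by simp
  thus ?thesis unfolding L_def R_def a_def N_def .
qed

lemma csd_meas[measurable]: "chi_square_density k \<in> borel_measurable borel"
  unfolding chi_square_density_def by measurable

lemma csd_nonneg: "chi_square_density k x \<ge> 0"
  unfolding chi_square_density_def by (cases "k = 0") (auto intro!: divide_nonneg_pos mult_pos_pos)

theorem mainTheorem9:
  fixes lam :: real and n :: nat
  assumes "lam > 0"
    and "real n \<ge> 4 / lam\<^sup>2 + 1"
  shows "measure (chi_square (n + 1)) {x. x < real (n + 1) * (1 - lam)}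
         \<le> measure (chi_square n) {x. x \<le> real n * (1 - lam)}"
proof (cases "lam < 1")
  case False
  have "emeasure (chi_square (n + 1)) {x. x < real (n + 1) * (1 - lam)}
      = (\<integral>\<^sup>+x. ennreal (chi_square_density (n+1) x) * indicator {x. x < real (n + 1) * (1 - lam)} x \<partial>lborel)"
    unfolding chi_square_def by (rule emeasure_density) auto
  also have "\<dots> = 0"
  proof -
    have "real (n + 1) * (1 - lam) \<le> 0" using False by (simp add: mult_nonneg_nonpos)
    then have "\<And>x. ennreal (chi_square_density (n+1) x) * indicator {x. x < real (n + 1) * (1 - lam)} x = 0"
      by (auto simp: chi_square_density_def indicator_def)
    then show ?thesis by (simp only:) simp
  qed
  finally have "measure (chi_square (n + 1)) {x. x < real (n + 1) * (1 - lam)} = 0"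
    by (simp add: measure_def)
  then show ?thesis by simp
next
  case True
  define c where "c = 1 - lam"
  define N where "N = real n"
  define a where "a = (N + 1) / N"
  have l2: "lam\<^sup>2 < 1" using mult_strict_mono[of lam 1 lam 1] assms True by (simp add: power2_eq_square)
  have "4 / lam\<^sup>2 > 4" using l2 assms(1) by (simp add: field_simps)
  hence N5: "N > 5" using assms N_def by linarith
  have c: "0 < c" "c < 1" using assms True c_def by auto
  have a: "a > 0" using N5 unfolding a_def by (intro divide_pos_pos) auto
  define S where "S = {x::real. x < real (n + 1) * (1 - lam)}"
  define T where "T = {x::real. x \<le> real n * (1 - lam)}"
  have "S = {..< real (n + 1) * (1 - lam)}" unfolding S_def by auto
  hence [measurable]: "S \<in> sets borel" by simp
  have "T = {.. real n * (1 - lam)}" unfolding T_def by auto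
  hence [measurable]: "T \<in> sets borel" by simp
  have "emeasure (chi_square (n + 1)) S
      = (\<integral>\<^sup>+x. ennreal (chi_square_density (n+1) x) * indicator S x \<partial>lborel)"
    unfolding chi_square_def by (rule emeasure_density) auto
  also have "\<dots> = ennreal \<bar>a\<bar> * (\<integral>\<^sup>+y. ennreal (chi_square_density (n+1) (0 + a * y)) * indicator S (0 + a * y) \<partial>lborel)"
    by (rule nn_integral_real_affine) (use a in auto)
  also have "\<dots> = (\<integral>\<^sup>+y. ennreal a * (ennreal (chi_square_density (n+1) (a * y)) * indicator S (a * y)) \<partial>lborel)"
    using a by (subst nn_integral_cmult) auto
  also have "\<dots> \<le> (\<integral>\<^sup>+y. ennreal (chi_square_density n y) * indicator T y \<partial>lborel)"
  proof (rule nn_integral_mono)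
    fix y :: real
    show "ennreal a * (ennreal (chi_square_density (n+1) (a * y)) * indicator S (a * y))
          \<le> ennreal (chi_square_density n y) * indicator T y"
    proof (cases "a * y \<in> S \<and> y > 0")
      case True
      have y0: "y > 0" using True by blast
      have "a * y < (N + 1) * c" using True unfolding S_def N_def c_def by (simp add: add.commute)
      moreover have "a * y = (N + 1) * (y / N)" unfolding a_def by simp
      ultimately have "(N + 1) * (y / N) < (N + 1) * c" by (simp only:)
      hence "y / N < c" by (rule mult_left_less_imp_less) (use N5 in simp)
      hence yl: "y < N * c" using N5 by (simp add: divide_less_eq mult.commute)
      hence yl': "y \<le> real n * (1 - lam)" unfolding N_def c_def by simp
      hence yT: "y \<in> T" unfolding T_def by simp
      have "a * chi_square_density (n + 1) (a * y) \<le> chi_square_density n y"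
        unfolding a_def N_def by (rule key[OF assms(1) \<open>lam < 1\<close> assms(2) y0 yl'])
      then show ?thesis using True yT a csd_nonneg[of "n+1" "a*y"]
        by (simp add: ennreal_mult'[symmetric] ennreal_leI)
    next
      case False
      then consider "a * y \<notin> S" | "y \<le> 0" by linarith
      then show ?thesis
      proof cases
        case 1 then show ?thesis by simp
      next
        case 2
        hence "a * y \<le> 0" using a by (simp add: mult_nonneg_nonpos)
        then show ?thesis by (simp add: chi_square_density_def)
      qed
    qed
  qed
  also have "\<dots> = emeasure (chi_square n) T"
    unfolding chi_square_def by (rule emeasure_density[symmetric]) auto
  finally have le: "emeasure (chi_square (n + 1)) S \<le> emeasure (chi_square n) T" .
  define Tm where "Tm = N * c"
  have Tm: "Tm > 0" using N5 c unfolding Tm_def by simp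
  define C where "C = Tm powr (N/2 - 1) / (2 powr (N/2) * Gamma (N/2))"
  have "emeasure (chi_square n) T = (\<integral>\<^sup>+y. ennreal (chi_square_density n y) * indicator T y \<partial>lborel)"
    unfolding chi_square_def by (rule emeasure_density) auto
  also have "\<dots> \<le> (\<integral>\<^sup>+y. ennreal C * indicator {0..Tm} y \<partial>lborel)"
  proof (rule nn_integral_mono)
    fix y :: real
    show "ennreal (chi_square_density n y) * indicator T y \<le> ennreal C * indicator {0..Tm} y"
    proof (cases "y > 0 \<and> y \<in> T")
      case True
      hence y: "0 < y" "y \<le> Tm" unfolding T_def Tm_def N_def c_def by auto
      have G: "Gamma (N/2) > 0" using N5 by simp
      have "y powr (N/2 - 1) \<le> Tm powr (N/2 - 1)"
        using y N5 by (intro powr_mono2) auto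
      moreover have "exp (- y / 2) \<le> 1" using y by simp
      ultimately have "y powr (N/2 - 1) * exp (- y / 2) \<le> Tm powr (N/2 - 1) * 1"
        by (intro mult_mono) auto
      hence "chi_square_density n y \<le> C"
        unfolding chi_square_density_def C_def N_def using y G
        by (auto intro!: divide_right_mono simp: N_def)
      then show ?thesis using True y by (auto intro!: ennreal_leI)
    next
      case False
      then show ?thesis by (auto simp: chi_square_density_def indicator_def)
    qed
  qed
  also have "\<dots> = ennreal C * ennreal Tm"
    using Tm by (simp add: nn_integral_cmult_indicator)
  also have "\<dots> < top" by (simp add: ennreal_mult_less_top)
  finally have fin: "emeasure (chi_square n) T < top" .
  show ?thesis
    using enn2real_mono[OF le fin] unfolding measure_def S_def T_def by simp
qed

end
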